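(* Let $\mathcal{Q}\subset\mathbb{R}^n$ be compact and let $(\mathcal{E},\mathcal{D})$ be a compression code for $\mathcal{Q}$ operating at rate $r$ and distortion $\delta$, with codebook $\mathcal{C}$. Let $\eta>1$ and $d\ge\frac{\eta r}{\log_2(1/({\rm e}\delta))}$, and let $A\in\mathbb{R}^{d\times n}$ have i.i.d. $\mathcal{N}(0,1)$ entries. For ${\bf x}_o\in\mathcal{Q}$ let ${\bf y}_o=A{\bf x}_o+{\bf z}$, where ${\bf z}\in\mathbb{R}^d$ (possibly depending on $A$ and ${\bf x}_o$) satisfies $\|{\bf z}\|_2\le\zeta$, and let $\hat{{\bf x}}_o$ be any element of $\arg\min_{{\bf c}\in\mathcal{C}}\|{\bf y}_o-A{\bf c}\|_2^2$. Assume $\zeta=\delta$ and $\frac{\eta}{\log\frac1{{\rm e}\delta}}<\epsilon$ for some $\epsilon>0$. Then for every ${\bf x}_o\in\mathcal{Q}$, \[ \mathbb{P}\big(\|\hat{{\bf x}}_o-{\bf x}_o\|_2\ge\theta'\zeta^{1-(1+\epsilon)/\eta}\big)\le{\rm e}^{-d/2}+{\rm e}^{-0.3\epsilon r}, \] where $\theta'=2{\rm e}^{-(1+\epsilon)/\eta}+2/\sqrt d$.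
   Context: A compression code $(\mathcal{E},\mathcal{D})$ for $\mathcal{Q}$ at rate $r$ consists of an encoder $\mathcal{E}:\mathcal{Q}\to\{1,2,\dots,2^r\}$ and a decoder $\mathcal{D}:\{1,\dots,2^r\}\to\mathbb{R}^n$; its codebook is $\mathcal{C}=\{\mathcal{D}(\mathcal{E}({\bf x})):{\bf x}\in\mathcal{Q}\}$, and its distortion is $\delta=\sup_{{\bf x}\in\mathcal{Q}}\|{\bf x}-\mathcal{D}(\mathcal{E}({\bf x}))\|_2$. $\log$ is the natural logarithm, $\log_2$ the base-2 logarithm. The probability is over $A$. *)

theory Defs
  imports "HOL-Probability.Probability"
begin

definition is_compression_code :: "('a \<Rightarrow> nat) \<Rightarrow> nat \<Rightarrow> 'a set \<Rightarrow> bool" where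
  "is_compression_code E r Q \<longleftrightarrow> (\<forall>x\<in>Q. E x \<in> {1..2^r})"

definition codebook :: "('a \<Rightarrow> nat) \<Rightarrow> (nat \<Rightarrow> 'b) \<Rightarrow> 'a set \<Rightarrow> 'b set" where
  "codebook E D Q = (\<lambda>x. D (E x)) ` Q"

definition distortion :: "(real^'n \<Rightarrow> nat) \<Rightarrow> (nat \<Rightarrow> real^'n) \<Rightarrow> (real^'n) set \<Rightarrow> real" where
  "distortion E D Q = (SUP x\<in>Q. norm (x - D (E x)))"

text \<open>Random d x n matrix (d = CARD('d), n = CARD('n)) with i.i.d. N(0,1) entries.\<close>
definition gaussian_matrix :: "'w measure \<Rightarrow> ('w \<Rightarrow> real^'n^'d) \<Rightarrow> bool" where
  "gaussian_matrix M A \<longleftrightarrow>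
     prob_space M \<and>
     prob_space.indep_vars M (\<lambda>_. borel) (\<lambda>(i,j) w. A w $ i $ j) UNIV \<and>
     (\<forall>i j. distributed M lborel (\<lambda>w. A w $ i $ j) std_normal_density)"

definition ls_argmin :: "real^'n^'d \<Rightarrow> real^'d \<Rightarrow> (real^'n) set \<Rightarrow> (real^'n) set" where
  "ls_argmin A y C = {c \<in> C. \<forall>c'\<in>C. (norm (y - A *v c))^2 \<le> (norm (y - A *v c'))^2}"

end

theory Submission
  imports Defs
begin


lemma normal_exp_sq:
  fixes \<sigma> s x :: real
  assumes "\<sigma> > 0" "1 - 2 * s * \<sigma>\<^sup>2 > 0"
  shows "normal_density 0 \<sigma> x * exp (s * x\<^sup>2) =
     (1 / sqrt (1 - 2 * s * \<sigma>\<^sup>2)) * normal_density 0 (\<sigma> / sqrt (1 - 2 * s * \<sigma>\<^sup>2)) x"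
proof -
  define q where "q = 1 - 2 * s * \<sigma>\<^sup>2"
  have q: "q > 0" using assms q_def by simp
  have 1: "(\<sigma> / sqrt q)\<^sup>2 = \<sigma>\<^sup>2 / q" using q by (simp add: power_divide)
  have 2: "sqrt (2 * pi * (\<sigma>\<^sup>2 / q)) = sqrt (2*pi*\<sigma>\<^sup>2) / sqrt q"
    by (simp add: real_sqrt_divide)
  have 3: "- x\<^sup>2 / (2 * (\<sigma>\<^sup>2 / q)) = - x\<^sup>2 / (2*\<sigma>\<^sup>2) + s * x\<^sup>2"
    using q assms(1) unfolding q_def by (simp add: field_simps)
  show ?thesis
  proof -
    have "exp (s * x\<^sup>2) * exp (- (x\<^sup>2 / (2 * \<sigma>\<^sup>2))) = exp (- (q * x\<^sup>2 / (2 * \<sigma>\<^sup>2)))"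
      unfolding exp_add[symmetric] using assms(1) unfolding q_def by (simp add: field_simps)
    then show ?thesis
      unfolding normal_density_def q_def[symmetric] 1 2 3
      using q assms(1) by (simp add: field_simps)
  qed
qed

lemma gauss_mgf:
  fixes Y :: "'w \<Rightarrow> real"
  assumes "prob_space M" "distributed M lborel Y (normal_density 0 \<sigma>)" "\<sigma> > 0" "1 - 2 * s * \<sigma>\<^sup>2 > 0"
  shows "(\<integral>\<^sup>+\<omega>. ennreal (exp (s * (Y \<omega>)\<^sup>2)) \<partial>M) = ennreal (1 / sqrt (1 - 2 * s * \<sigma>\<^sup>2))"
proof -
  have "(\<integral>\<^sup>+\<omega>. ennreal (exp (s * (Y \<omega>)\<^sup>2)) \<partial>M)
      = (\<integral>\<^sup>+x. ennreal (normal_density 0 \<sigma> x) * ennreal (exp (s * x\<^sup>2)) \<partial>lborel)"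
    by (rule distributed_nn_integral[symmetric, OF assms(2)]) simp
  also have "\<dots> = (\<integral>\<^sup>+x. ennreal (1 / sqrt (1 - 2 * s * \<sigma>\<^sup>2)) * ennreal (normal_density 0 (\<sigma> / sqrt (1 - 2 * s * \<sigma>\<^sup>2)) x) \<partial>lborel)"
    apply (intro nn_integral_cong)
    apply (subst ennreal_mult'[symmetric], simp)+
    using assms(4) apply simp
    apply (simp add: normal_exp_sq[OF assms(3,4)])
    done
  also have "\<dots> = ennreal (1 / sqrt (1 - 2 * s * \<sigma>\<^sup>2)) * (\<integral>\<^sup>+x. ennreal (normal_density 0 (\<sigma> / sqrt (1 - 2 * s * \<sigma>\<^sup>2)) x) \<partial>lborel)"
    by (rule nn_integral_cmult) simp
  also have "(\<integral>\<^sup>+x. ennreal (normal_density 0 (\<sigma> / sqrt (1 - 2 * s * \<sigma>\<^sup>2)) x) \<partial>lborel) = 1"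
    using assms(3,4) by (subst nn_integral_eq_integral) auto
  finally show ?thesis by simp
qed



lemma indep_block:
  fixes X :: "'i \<Rightarrow> 'w \<Rightarrow> real"
  assumes "prob_space M" "prob_space.indep_vars M (\<lambda>_. borel) X I" "\<And>j. j \<in> L \<Longrightarrow> K j \<subseteq> I"
    "disjoint_family_on K L"
    "\<And>j. j \<in> L \<Longrightarrow> G j \<in> borel_measurable (PiM (K j) (\<lambda>_. borel))"
  shows "prob_space.indep_vars M (\<lambda>_. borel) (\<lambda>j \<omega>. G j (restrict (\<lambda>i. X i \<omega>) (K j))) L"
proof -
  interpret prob_space M by fact
  have "indep_vars (\<lambda>j. PiM (K j) (\<lambda>_. borel)) (\<lambda>j \<omega>. restrict (\<lambda>i. X i \<omega>) (K j)) L"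
    by (rule indep_vars_restrict[OF assms(2)]) (use assms in auto)
  from indep_vars_compose2[OF this, of G "\<lambda>_. borel"] assms(5)
  show ?thesis by simp
qed

lemma mv_component: "(A *v u) $ i = (\<Sum>j\<in>UNIV. A $ i $ j * u $ j)"
  by (simp add: matrix_vector_mult_def)

lemma row_normal:
  fixes A :: "'w \<Rightarrow> real^'n^'d" and u :: "real^'n"
  assumes "gaussian_matrix M A" "u \<noteq> 0"
  shows "distributed M lborel (\<lambda>\<omega>. (A \<omega> *v u) $ i) (normal_density 0 (norm u))"
proof -
  have ps: "prob_space M" and ind: "prob_space.indep_vars M (\<lambda>_. borel) (\<lambda>(i,j) w. A w $ i $ j) UNIV"
    and dist: "\<And>i j. distributed M lborel (\<lambda>w. A w $ i $ j) std_normal_density"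
    using assms(1) unfolding gaussian_matrix_def by auto
  interpret prob_space M by fact
  define J where "J = {j. u $ j \<noteq> 0}"
  have J: "J \<noteq> {}" using assms(2) by (auto simp: J_def vec_eq_iff)
  have fin: "finite J" by simp
  have eq: "\<And>\<omega>. (A \<omega> *v u) $ i = (\<Sum>j\<in>J. A \<omega> $ i $ j * u $ j)"
    unfolding mv_component by (rule sum.mono_neutral_right) (auto simp: J_def)
  have indJ: "indep_vars (\<lambda>_. borel) (\<lambda>j \<omega>. (\<lambda>g. g (i,j) * u $ j) (restrict (\<lambda>p. (\<lambda>(i,j) w. A w $ i $ j) p \<omega>) {(i,j)})) J"
    by (rule indep_block[OF ps ind]) (auto simp: disjoint_family_on_def)
  then have indJ': "indep_vars (\<lambda>_. borel) (\<lambda>j \<omega>. A \<omega> $ i $ j * u $ j) J"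
    by (rule indep_vars_cong[THEN iffD1, rotated 3]) auto
  have dj: "distributed M lborel (\<lambda>\<omega>. A \<omega> $ i $ j * u $ j) (normal_density 0 \<bar>u $ j\<bar>)" if "j \<in> J" for j
  proof -
    have "distributed M lborel (\<lambda>x. 0 + u $ j * A x $ i $ j) (normal_density (0 + u $ j * 0) (\<bar>u $ j\<bar> * 1))"
      by (rule normal_density_affine[OF dist]) (use that J_def in auto)
    then show ?thesis by (simp add: mult.commute)
  qed
  have "distributed M lborel (\<lambda>\<omega>. \<Sum>j\<in>J. A \<omega> $ i $ j * u $ j) (normal_density (\<Sum>j\<in>J. 0) (sqrt (\<Sum>j\<in>J. \<bar>u $ j\<bar>\<^sup>2)))"
    by (rule sum_indep_normal[OF fin J indJ']) (auto simp: J_def dj)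
  moreover have "sqrt (\<Sum>j\<in>J. \<bar>u $ j\<bar>\<^sup>2) = norm u"
    unfolding norm_vec_def L2_set_def
    by (simp, rule sum.mono_neutral_left) (auto simp: J_def)
  ultimately show ?thesis by (simp add: eq)
qed



lemma norm_sq_vec: "(norm (v :: real^'d))\<^sup>2 = (\<Sum>i\<in>UNIV. (v $ i)\<^sup>2)"
  unfolding norm_vec_def L2_set_def by (simp add: sum_nonneg)

lemma norm_mgf:
  fixes A :: "'w \<Rightarrow> real^'n^'d" and u :: "real^'n"
  assumes "gaussian_matrix M A" "u \<noteq> 0" "1 - 2 * s * (norm u)\<^sup>2 > 0"
  shows "(\<integral>\<^sup>+\<omega>. ennreal (exp (s * (norm (A \<omega> *v u))\<^sup>2)) \<partial>M)
           = ennreal ((1 / sqrt (1 - 2 * s * (norm u)\<^sup>2)) ^ CARD('d))"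
proof -
  have ps: "prob_space M" and ind: "prob_space.indep_vars M (\<lambda>_. borel) (\<lambda>(i,j) w. A w $ i $ j) UNIV"
    and dist: "\<And>i j. distributed M lborel (\<lambda>w. A w $ i $ j) std_normal_density"
    using assms(1) unfolding gaussian_matrix_def by auto
  interpret prob_space M by fact
  have nu: "norm u > 0" using assms(2) by simp
  have indI: "indep_vars (\<lambda>_. borel) (\<lambda>i \<omega>. (\<lambda>g. ennreal (exp (s * (\<Sum>j\<in>UNIV. g (i,j) * u $ j)\<^sup>2)))
        (restrict (\<lambda>p. (\<lambda>(i,j) w. A w $ i $ j) p \<omega>) ({i} \<times> UNIV))) UNIV"
    by (rule indep_block[OF ps ind]) (auto simp: disjoint_family_on_def)
  then have indI': "indep_vars (\<lambda>_. borel) (\<lambda>i \<omega>. ennreal (exp (s * ((A \<omega> *v u) $ i)\<^sup>2))) UNIV"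
    by (rule indep_vars_cong[THEN iffD1, rotated 3]) (auto simp: mv_component)
  have "(\<integral>\<^sup>+\<omega>. ennreal (exp (s * (norm (A \<omega> *v u))\<^sup>2)) \<partial>M)
     = (\<integral>\<^sup>+\<omega>. (\<Prod>i\<in>UNIV. ennreal (exp (s * ((A \<omega> *v u) $ i)\<^sup>2))) \<partial>M)"
    by (intro nn_integral_cong) (simp add: norm_sq_vec sum_distrib_left exp_sum prod_ennreal)
  also have "\<dots> = (\<Prod>i\<in>UNIV. \<integral>\<^sup>+\<omega>. ennreal (exp (s * ((A \<omega> *v u) $ i)\<^sup>2)) \<partial>M)"
    by (rule indep_vars_nn_integral[OF _ indI']) auto
  also have "\<dots> = (\<Prod>i\<in>(UNIV::'d set). ennreal (1 / sqrt (1 - 2 * s * (norm u)\<^sup>2)))"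
    by (intro prod.cong refl gauss_mgf[OF ps row_normal[OF assms(1,2)] nu assms(3)])
  also have "\<dots> = ennreal ((1 / sqrt (1 - 2 * s * (norm u)\<^sup>2)) ^ CARD('d))"
    unfolding prod_constant by (rule ennreal_power) (use assms(3) in simp)
  finally show ?thesis .
qed



lemma markov_measure:
  assumes "prob_space M" "S \<in> sets M" "f \<in> borel_measurable M" "\<And>\<omega>. \<omega> \<in> S \<Longrightarrow> c \<le> f \<omega>"
    "\<And>\<omega>. 0 \<le> f \<omega>" "c > 0" "(\<integral>\<^sup>+\<omega>. ennreal (f \<omega>) \<partial>M) = ennreal E" "E \<ge> 0"
  shows "measure M S \<le> E / c"
proof -
  interpret prob_space M by fact
  have "ennreal c * emeasure M S = (\<integral>\<^sup>+\<omega>. ennreal c * indicator S \<omega> \<partial>M)"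
    by (rule nn_integral_cmult_indicator[symmetric]) fact
  also have "\<dots> \<le> (\<integral>\<^sup>+\<omega>. ennreal (f \<omega>) \<partial>M)"
    by (intro nn_integral_mono) (auto simp: indicator_def assms(4) intro!: ennreal_leI)
  finally have "ennreal c * ennreal (measure M S) \<le> ennreal E"
    using assms(7) by (simp add: emeasure_eq_measure)
  then have "ennreal (c * measure M S) \<le> ennreal E"
    using assms(6) by (simp add: ennreal_mult)
  then have "c * measure M S \<le> E" using assms(8) by (simp add: ennreal_le_iff)
  then show ?thesis using assms(6) by (simp add: field_simps)
qed

lemma gm_meas:
  assumes "gaussian_matrix M A"
  shows "(\<lambda>\<omega>. (norm (A \<omega> *v u))\<^sup>2) \<in> borel_measurable M"
proof -
  have [measurable]: "(\<lambda>w. A w $ i $ j) \<in> borel_measurable M" for i j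
    using assms unfolding gaussian_matrix_def
    by (metis distributed_measurable measurable_lborel1)
  have "(\<lambda>\<omega>. (\<Sum>i\<in>UNIV. (\<Sum>j\<in>UNIV. A \<omega> $ i $ j * u $ j)\<^sup>2)) \<in> borel_measurable M"
    by measurable
  then show ?thesis by (simp add: norm_sq_vec mv_component)
qed

lemma upper_tail:
  fixes A :: "'w \<Rightarrow> real^'n^'d" and u :: "real^'n"
  assumes "gaussian_matrix M A" "u \<noteq> 0"
  shows "measure M {\<omega>\<in>space M. 4 * real CARD('d) * (norm u)\<^sup>2 \<le> (norm (A \<omega> *v u))\<^sup>2}
         \<le> exp (- real CARD('d) / 2)"
proof -
  have ps: "prob_space M" using assms(1) unfolding gaussian_matrix_def by auto
  define \<sigma> where "\<sigma> = norm u"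
  have sp: "\<sigma> > 0" using assms(2) \<sigma>_def by simp
  define s where "s = 3 / (8 * \<sigma>\<^sup>2)"
  have q: "1 - 2 * s * \<sigma>\<^sup>2 = 1/4" using sp unfolding s_def by (simp add: field_simps)
  define d where "d = real CARD('d)"
  have mgf: "(\<integral>\<^sup>+\<omega>. ennreal (exp (s * (norm (A \<omega> *v u))\<^sup>2)) \<partial>M) = ennreal (2 ^ CARD('d))"
  proof -
    have h: "sqrt (1/4::real) = 1/2" by (rule real_sqrt_unique) (auto simp: power2_eq_square)
    show ?thesis
      using norm_mgf[OF assms, of s] unfolding \<sigma>_def[symmetric] q h by simp
  qed
  have "measure M {\<omega>\<in>space M. 4 * real CARD('d) * (norm u)\<^sup>2 \<le> (norm (A \<omega> *v u))\<^sup>2}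
      \<le> 2 ^ CARD('d) / exp (s * (4 * d * \<sigma>\<^sup>2))"
  proof (rule markov_measure[OF ps _ _ _ _ _ mgf])
    show "{\<omega> \<in> space M. 4 * real CARD('d) * (norm u)\<^sup>2 \<le> (norm (A \<omega> *v u))\<^sup>2} \<in> sets M"
      using gm_meas[OF assms(1)] by measurable
    show "(\<lambda>\<omega>. exp (s * (norm (A \<omega> *v u))\<^sup>2)) \<in> borel_measurable M"
      using gm_meas[OF assms(1)] by measurable
    show "exp (s * (4 * d * \<sigma>\<^sup>2)) \<le> exp (s * (norm (A \<omega> *v u))\<^sup>2)"
      if "\<omega> \<in> {\<omega> \<in> space M. 4 * real CARD('d) * (norm u)\<^sup>2 \<le> (norm (A \<omega> *v u))\<^sup>2}" for \<omega>
    proof -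
      have "4 * d * \<sigma>\<^sup>2 \<le> (norm (A \<omega> *v u))\<^sup>2" using that unfolding d_def \<sigma>_def by auto
      then have "s * (4 * d * \<sigma>\<^sup>2) \<le> s * (norm (A \<omega> *v u))\<^sup>2"
        by (rule mult_left_mono) (use sp in \<open>simp add: s_def\<close>)
      then show ?thesis by simp
    qed
  qed auto
  also have "s * (4 * d * \<sigma>\<^sup>2) = 3 / 2 * d" using sp unfolding s_def by (simp add: field_simps)
  also have "(2::real) ^ CARD('d) / exp (3 / 2 * d) \<le> exp (- d / 2)"
  proof -
    have "(2::real) ^ CARD('d) \<le> (exp 1) ^ CARD('d)"
      by (rule power_mono) (use exp_ge_add_one_self[of 1] in auto)
    also have "\<dots> = exp d" 
    proof -
      have "exp (real CARD('d) * 1) = exp 1 ^ CARD('d)" by (rule exp_of_nat_mult)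
      then show ?thesis unfolding d_def by simp
    qed
    finally have "(2::real) ^ CARD('d) \<le> exp d" .
    moreover have "exp d = exp (- d / 2) * exp (3 / 2 * d)" by (simp add: exp_add[symmetric])
    ultimately show ?thesis by (simp add: divide_le_eq)
  qed
  finally show ?thesis unfolding d_def .
qed

lemma lower_tail:
  fixes A :: "'w \<Rightarrow> real^'n^'d" and u :: "real^'n"
  assumes "gaussian_matrix M A" "u \<noteq> 0" "lam > 0"
  shows "measure M {\<omega>\<in>space M. (norm (A \<omega> *v u))\<^sup>2 \<le> lam * real CARD('d) * (norm u)\<^sup>2}
         \<le> exp (real CARD('d) / 2) * lam powr (real CARD('d) / 2)"
proof -
  have ps: "prob_space M" using assms(1) unfolding gaussian_matrix_def by auto
  define \<sigma> where "\<sigma> = norm u"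
  have sp: "\<sigma> > 0" using assms(2) \<sigma>_def by simp
  define s where "s = - 1 / (2 * lam * \<sigma>\<^sup>2)"
  have q: "1 - 2 * s * \<sigma>\<^sup>2 = 1 + 1 / lam" using sp assms(3) unfolding s_def by (simp add: field_simps)
  define d where "d = real CARD('d)"
  have mgf: "(\<integral>\<^sup>+\<omega>. ennreal (exp (s * (norm (A \<omega> *v u))\<^sup>2)) \<partial>M) = ennreal ((1 / sqrt (1 + 1 / lam)) ^ CARD('d))"
  proof -
    have pos: "0 < 1 + 1/lam" using assms(3) by (simp add: add_pos_pos)
    show ?thesis
      using norm_mgf[OF assms(1,2), of s] unfolding \<sigma>_def[symmetric] q using pos by simp
  qed
  have "measure M {\<omega>\<in>space M. (norm (A \<omega> *v u))\<^sup>2 \<le> lam * real CARD('d) * (norm u)\<^sup>2}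
      \<le> (1 / sqrt (1 + 1 / lam)) ^ CARD('d) / exp (- d / 2)"
  proof (rule markov_measure[OF ps _ _ _ _ _ mgf])
    show "{\<omega>\<in>space M. (norm (A \<omega> *v u))\<^sup>2 \<le> lam * real CARD('d) * (norm u)\<^sup>2} \<in> sets M"
      using gm_meas[OF assms(1)] by measurable
    show "(\<lambda>\<omega>. exp (s * (norm (A \<omega> *v u))\<^sup>2)) \<in> borel_measurable M"
      using gm_meas[OF assms(1)] by measurable
    show "exp (- d / 2) \<le> exp (s * (norm (A \<omega> *v u))\<^sup>2)"
      if "\<omega> \<in> {\<omega>\<in>space M. (norm (A \<omega> *v u))\<^sup>2 \<le> lam * real CARD('d) * (norm u)\<^sup>2}" for \<omega>
    proof -
      have h: "(norm (A \<omega> *v u))\<^sup>2 \<le> lam * d * \<sigma>\<^sup>2" using that unfolding d_def \<sigma>_def by auto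
      have "s * (lam * d * \<sigma>\<^sup>2) \<le> s * (norm (A \<omega> *v u))\<^sup>2"
        by (rule mult_left_mono_neg[OF h]) (use sp assms(3) in \<open>simp add: s_def\<close>)
      moreover have "s * (lam * d * \<sigma>\<^sup>2) = - d / 2" using sp assms(3) unfolding s_def by (simp add: field_simps)
      ultimately show ?thesis by simp
    qed
  qed (use assms(3) in auto)
  also have "(1 / sqrt (1 + 1 / lam)) ^ CARD('d) / exp (- d / 2) \<le> exp (d / 2) * lam powr (d / 2)"
  proof -
    have "(1 / sqrt (1 + 1 / lam)) \<le> sqrt lam"
      using assms(3) by (simp add: divide_le_eq real_sqrt_mult[symmetric] field_simps)
    then have "(1 / sqrt (1 + 1 / lam)) ^ CARD('d) \<le> sqrt lam ^ CARD('d)"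
      by (rule power_mono) (use assms(3) in \<open>auto intro!: add_nonneg_nonneg\<close>)
    also have "sqrt lam ^ CARD('d) = lam powr (d / 2)"
    proof -
      have "sqrt lam = lam powr (1/2)" using assms(3) by (simp add: powr_half_sqrt)
      then have "sqrt lam ^ CARD('d) = (lam powr (1/2)) powr real CARD('d)"
        using assms(3) by (simp add: powr_realpow)
      also have "\<dots> = lam powr (d / 2)" unfolding d_def by (simp add: powr_powr)
      finally show ?thesis .
    qed
    finally have X: "(1 / sqrt (1 + 1 / lam)) ^ CARD('d) \<le> lam powr (d / 2)" .
    have E: "(1 / sqrt (1 + 1 / lam)) ^ CARD('d) / exp (- d / 2) = exp (d / 2) * (1 / sqrt (1 + 1 / lam)) ^ CARD('d)"
    proof -
      have "inverse (exp (- d / 2)) = exp (d / 2)"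
        by (metis exp_minus minus_divide_left minus_minus inverse_inverse_eq)
      then show ?thesis by (metis divide_inverse mult.commute)
    qed
    show ?thesis unfolding E by (rule mult_left_mono[OF X]) simp
  qed
  finally show ?thesis unfolding d_def .
qed



lemma ln2_ge: "ln (2::real) \<ge> 0.6"
proof -
  have "exp (3::real) = exp 1 ^ 3" using exp_of_nat_mult[of 3 "1::real"] by simp
  also have "\<dots> \<le> 3 ^ 3" by (rule power_mono[OF exp_le]) simp
  also have "\<dots> \<le> (2::real) ^ 5" by simp
  also have "(2::real) ^ 5 = exp (5 * ln 2)" using exp_of_nat_mult[of 5 "ln (2::real)"] by simp
  finally have "3 \<le> 5 * ln (2::real)" by simp
  then show ?thesis by simp
qed

lemma numeric:
  fixes d \<delta> \<eta> \<epsilon> :: real and r :: nat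
  assumes "0 < \<delta>" "\<delta> < 1 / exp 1" "\<eta> > 1" "d \<ge> \<eta> * real r / log 2 (1 / (exp 1 * \<delta>))"
    "\<epsilon> > 0" "\<eta> / ln (1 / (exp 1 * \<delta>)) < \<epsilon>" "d > 0"
  shows "2 ^ r * exp (d / 2) * (exp 1 * \<delta>) powr ((1 + \<epsilon>) / \<eta> * d) \<le> exp (- 0.3 * \<epsilon> * real r)"
proof -
  define L where "L = ln (1 / (exp 1 * \<delta>))"
  have ed: "exp 1 * \<delta> < 1" "0 < exp 1 * \<delta>" using assms(1,2) by (auto simp: field_simps)
  have Lpos: "L > 0" unfolding L_def using ed by simp
  have lned: "ln (exp 1 * \<delta>) = - L" unfolding L_def using ed by (simp add: ln_div)
  have l2: "ln (2::real) \<ge> 0.6" by (rule ln2_ge)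
  have h1: "d * L \<ge> \<eta> * real r * ln 2"
  proof -
    have lg: "log 2 (1 / (exp 1 * \<delta>)) = L / ln 2" unfolding L_def log_def by simp
    have "d \<ge> \<eta> * real r / (L / ln 2)" using assms(4) unfolding lg .
    then have "d \<ge> \<eta> * real r * ln 2 / L" by (simp only: divide_divide_eq_right)
    then show ?thesis using Lpos by (simp add: field_simps)
  qed
  have h2: "\<epsilon> * L > \<eta>" using assms(6) Lpos unfolding L_def[symmetric] by (simp add: field_simps)
  have "2 ^ r * exp (d / 2) * (exp 1 * \<delta>) powr ((1 + \<epsilon>) / \<eta> * d)
      = exp (real r * ln 2 + d / 2 - (1 + \<epsilon>) / \<eta> * d * L)"
  proof -
    have "(2::real) ^ r = exp (real r * ln 2)" using exp_of_nat_mult[of r "ln (2::real)"] by simp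
    moreover have "(exp 1 * \<delta>) powr ((1 + \<epsilon>) / \<eta> * d) = exp (- ((1 + \<epsilon>) / \<eta> * d * L))"
      using ed assms(1) by (simp add: powr_def lned)
    ultimately show ?thesis by (simp add: exp_add[symmetric] exp_diff)
  qed
  also have "\<dots> \<le> exp (- 0.3 * \<epsilon> * real r)"
  proof (subst exp_le_cancel_iff)
    have a: "\<eta> * real r * ln 2 \<le> d * L" by (rule h1)
    have b0: "\<eta> * real r * 0.6 \<le> d * L" using a l2 assms(3)
      by (smt (verit) mult_left_mono of_nat_0_le_iff zero_le_mult_iff)
    have b: "0.3 * \<epsilon> * \<eta> * real r \<le> 0.5 * \<epsilon> * d * L"
      using mult_left_mono[OF b0, of "\<epsilon> / 2"] assms(5) by (simp add: algebra_simps)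
    have c: "\<eta> * d / 2 \<le> \<epsilon> * L * d / 2" using h2 assms(7) by simp
    have hh: "\<eta> * (real r * ln 2 + d / 2 - (1 + \<epsilon>) / \<eta> * d * L) \<le> \<eta> * (- 0.3 * \<epsilon> * real r)"
    proof -
      have "\<eta> * (real r * ln 2 + d / 2 - (1 + \<epsilon>) / \<eta> * d * L)
            = \<eta> * real r * ln 2 + \<eta> * d / 2 - d * L - \<epsilon> * d * L"
        using assms(3) by (simp add: field_simps)
      also have "\<dots> \<le> - (0.3 * \<epsilon> * \<eta> * real r)" using a b c by (simp add: algebra_simps)
      finally show ?thesis by (simp add: algebra_simps)
    qed
    show "real r * ln 2 + d / 2 - (1 + \<epsilon>) / \<eta> * d * L \<le> - 0.3 * \<epsilon> * real r"
      using mult_left_le_imp_le[OF hh] assms(3) by simp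
  qed
  finally show ?thesis .
qed

lemma deterministic:
  fixes M0 :: "real^'n^'d"
  assumes "xh \<in> ls_argmin M0 (M0 *v xo + z) C" "c0 \<in> C" "norm z \<le> \<delta>"
  shows "norm (M0 *v (xh - xo)) \<le> norm (M0 *v (xo - c0)) + 2 * \<delta>"
proof -
  define y where "y = M0 *v xo + z"
  have "(norm (y - M0 *v xh))\<^sup>2 \<le> (norm (y - M0 *v c0))\<^sup>2"
    using assms(1,2) unfolding ls_argmin_def y_def by auto
  then have 1: "norm (y - M0 *v xh) \<le> norm (y - M0 *v c0)"
    by (rule power2_le_imp_le) simp
  have "y - M0 *v c0 = M0 *v (xo - c0) + z" unfolding y_def by (simp add: algebra_simps)
  then have 2: "norm (y - M0 *v c0) \<le> norm (M0 *v (xo - c0)) + \<delta>"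
    using norm_triangle_ineq[of "M0 *v (xo - c0)" z] assms(3) by simp
  have "M0 *v (xh - xo) = - (y - M0 *v xh) + z" unfolding y_def by (simp add: algebra_simps)
  then have "norm (M0 *v (xh - xo)) \<le> norm (y - M0 *v xh) + \<delta>"
    using norm_triangle_ineq[of "- (y - M0 *v xh)" z] assms(3) by (simp add: norm_minus_commute)
  with 1 2 show ?thesis by simp
qed



theorem corollary2:
  fixes Q :: "(real^'n) set"
    and E :: "real^'n \<Rightarrow> nat" and D :: "nat \<Rightarrow> real^'n"
    and r :: nat and \<delta> \<zeta> \<eta> \<epsilon> :: real
    and M :: "'w measure" and A :: "'w \<Rightarrow> real^'n^'d"
    and xo :: "real^'n"
  assumes "compact Q"
    and "is_compression_code E r Q"
    and "\<delta> = distortion E D Q"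
    and "0 < \<delta>" and "\<delta> < 1 / exp 1"
    and "\<eta> > 1"
    and "real CARD('d) \<ge> \<eta> * real r / log 2 (1 / (exp 1 * \<delta>))"
    and "gaussian_matrix M A"
    and "\<zeta> = \<delta>"
    and "\<epsilon> > 0"
    and "\<eta> / ln (1 / (exp 1 * \<delta>)) < \<epsilon>"
    and "xo \<in> Q"
  shows "measure M {w \<in> space M. \<exists>z :: real^'d. norm z \<le> \<zeta> \<and>
            (\<exists>xhat \<in> ls_argmin (A w) (A w *v xo + z) (codebook E D Q).
               norm (xhat - xo) \<ge>
                 (2 * exp (- (1 + \<epsilon>) / \<eta>) + 2 / sqrt (real CARD('d)))
                   * \<zeta> powr (1 - (1 + \<epsilon>) / \<eta>))}
         \<le> exp (- real CARD('d) / 2) + exp (- 0.3 * \<epsilon> * real r)"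
    (is "measure M ?S \<le> _")
proof -
  interpret prob_space M using assms(8) unfolding gaussian_matrix_def by auto
  define d where "d = real CARD('d)"
  have d0: "d > 0" unfolding d_def by simp
  define w where "w = (1 + \<epsilon>) / \<eta>"
  have wpos: "w > 0" unfolding w_def using assms(6,10) by simp
  define T where "T = (2 * exp (- (1 + \<epsilon>) / \<eta>) + 2 / sqrt d) * \<zeta> powr (1 - (1 + \<epsilon>) / \<eta>)"
  have Tpos: "T > 0" unfolding T_def using assms(4,9) d0 by (intro mult_pos_pos add_pos_pos) auto
  define K where "K = 2 * (sqrt d + 1) * \<delta>"
  have Kpos: "K > 0" unfolding K_def using assms(4) d0 by (intro mult_pos_pos add_pos_pos) auto
  define C where "C = codebook E D Q"
  define c0 where "c0 = D (E xo)"
  define u0 where "u0 = xo - c0"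
  have c0C: "c0 \<in> C" unfolding C_def c0_def codebook_def using assms(12) by auto
  have Csub: "C \<subseteq> D ` {1..2^r}"
    using assms(2) unfolding C_def codebook_def is_compression_code_def by auto
  have finC: "finite C" by (rule finite_subset[OF Csub]) simp
  have cardC: "card C \<le> 2 ^ r"
  proof -
    have "card C \<le> card (D ` {1..2^r})" by (rule card_mono[OF _ Csub]) simp
    also have "\<dots> \<le> card {1..(2::nat)^r}" by (rule card_image_le) simp
    finally show ?thesis by simp
  qed
  have u0\<delta>: "norm u0 \<le> \<delta>"
  proof -
    obtain B where B: "\<And>x. x \<in> Q \<Longrightarrow> norm x \<le> B"
      using compact_imp_bounded[OF assms(1)] unfolding bounded_iff by auto
    have bdd: "bdd_above ((\<lambda>x. norm (x - D (E x))) ` Q)"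
    proof (rule bdd_aboveI2)
      fix x assume x: "x \<in> Q"
      have Ex: "E x \<in> {1..2^r}" using assms(2) x unfolding is_compression_code_def by auto
      have "norm (x - D (E x)) \<le> norm x + norm (D (E x))" by (rule norm_triangle_ineq4)
      also have "\<dots> \<le> B + (\<Sum>k\<in>{1..2^r}. norm (D k))"
        using B[OF x] member_le_sum[OF Ex, of "\<lambda>k. norm (D k)"] by simp
      finally show "norm (x - D (E x)) \<le> B + (\<Sum>k\<in>{1..2^r}. norm (D k))" .
    qed
    have "norm (xo - D (E xo)) \<le> distortion E D Q"
      unfolding distortion_def by (rule cSUP_upper[OF assms(12) bdd])
    then show ?thesis unfolding u0_def c0_def assms(3) .
  qed
  define C' where "C' = {c\<in>C. T \<le> norm (c - xo)}"
  define B where "B = {\<omega>\<in>space M. 4 * d * \<delta>\<^sup>2 < (norm (A \<omega> *v u0))\<^sup>2}"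
  define L where "L c = {\<omega>\<in>space M. (norm (A \<omega> *v (c - xo)))\<^sup>2 \<le> K\<^sup>2}" for c
  have measB: "B \<in> sets M" unfolding B_def using gm_meas[OF assms(8)] by measurable
  have measL: "L c \<in> sets M" for c unfolding L_def using gm_meas[OF assms(8)] by measurable
  have incl: "?S \<subseteq> B \<union> (\<Union>c\<in>C'. L c)"
  proof
    fix \<omega> assume "\<omega> \<in> ?S"
    then obtain z xh where om: "\<omega> \<in> space M" and z: "norm z \<le> \<delta>"
      and xh: "xh \<in> ls_argmin (A \<omega>) (A \<omega> *v xo + z) C" and xT: "T \<le> norm (xh - xo)"
      unfolding C_def T_def d_def assms(9) by auto
    show "\<omega> \<in> B \<union> (\<Union>c\<in>C'. L c)"
    proof (cases "\<omega> \<in> B")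
      case False
      then have "(norm (A \<omega> *v u0))\<^sup>2 \<le> (2 * sqrt d * \<delta>)\<^sup>2"
        using om d0 unfolding B_def by (auto simp: power_mult_distrib)
      then have n0: "norm (A \<omega> *v u0) \<le> 2 * sqrt d * \<delta>"
        by (rule power2_le_imp_le) (use assms(4) d0 in simp)
      have "norm (A \<omega> *v (xh - xo)) \<le> norm (A \<omega> *v (xo - c0)) + 2 * \<delta>"
        by (rule deterministic[OF xh c0C z])
      also have "\<dots> \<le> K" using n0 unfolding K_def u0_def by (simp add: algebra_simps)
      finally have "(norm (A \<omega> *v (xh - xo)))\<^sup>2 \<le> K\<^sup>2"
        by (intro power_mono) auto
      moreover have "xh \<in> C'" using xh xT unfolding C'_def ls_argmin_def by auto
      ultimately show ?thesis using om unfolding L_def by auto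
    qed auto
  qed
  have PB: "measure M B \<le> exp (- d / 2)"
  proof (cases "u0 = 0")
    case True
    moreover have "0 \<le> d * \<delta>\<^sup>2" using d0 by simp
    ultimately have "B = {}" unfolding B_def by auto
    then show ?thesis by simp
  next
    case False
    have "B \<subseteq> {\<omega>\<in>space M. 4 * real CARD('d) * (norm u0)\<^sup>2 \<le> (norm (A \<omega> *v u0))\<^sup>2}"
    proof -
      have h: "4 * d * (norm u0)\<^sup>2 \<le> 4 * d * \<delta>\<^sup>2"
        using u0\<delta> d0 by (intro mult_left_mono power_mono) auto
      show ?thesis
      proof
        fix x assume "x \<in> B"
        then have "x \<in> space M" "4 * d * \<delta>\<^sup>2 < (norm (A x *v u0))\<^sup>2" unfolding B_def by auto
        then show "x \<in> {\<omega>\<in>space M. 4 * real CARD('d) * (norm u0)\<^sup>2 \<le> (norm (A \<omega> *v u0))\<^sup>2}"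
          using h unfolding d_def by (intro CollectI conjI; (assumption | linarith))
      qed
    qed
    then have "measure M B \<le> measure M {\<omega>\<in>space M. 4 * real CARD('d) * (norm u0)\<^sup>2 \<le> (norm (A \<omega> *v u0))\<^sup>2}"
      by (rule finite_measure_mono) (use gm_meas[OF assms(8)] in measurable)
    also have "\<dots> \<le> exp (- d / 2)" unfolding d_def by (rule upper_tail[OF assms(8) False])
    finally show ?thesis .
  qed
  define bnd where "bnd = exp (d / 2) * (exp 1 * \<delta>) powr (w * d)"
  have PL: "measure M (L c) \<le> bnd" if c: "c \<in> C'" for c
  proof -
    define v where "v = c - xo"
    have vT: "T \<le> norm v" using c unfolding C'_def v_def by auto
    then have vpos: "norm v > 0" using Tpos by linarith
    then have v0: "v \<noteq> 0" by auto
    define lam where "lam = K\<^sup>2 / (d * (norm v)\<^sup>2)"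
    have lampos: "lam > 0" unfolding lam_def using Kpos d0 vpos by simp
    have Leq: "L c = {\<omega>\<in>space M. (norm (A \<omega> *v v))\<^sup>2 \<le> lam * real CARD('d) * (norm v)\<^sup>2}"
      unfolding L_def lam_def v_def d_def using d0 vpos unfolding d_def by simp
    have ed: "0 < exp 1 * \<delta>" using assms(4) by simp
    define p where "p = (exp 1 * \<delta>) powr w"
    have ppos: "p > 0" unfolding p_def using ed assms(4) by simp
    have KT: "K \<le> p * sqrt d * T"
    proof -
      have p_eq: "p = exp w * \<delta> powr w" unfolding p_def using assms(4)
        by (simp add: powr_def ln_mult distrib_left exp_add)
      have ew: "exp (- (1 + \<epsilon>) / \<eta>) = exp (- w)" unfolding w_def by (simp add: minus_divide_left)
      have dd: "\<delta> powr w * \<delta> powr (1 - w) = \<delta>" using assms(4) by (simp add: powr_add[symmetric])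
      have "p * sqrt d * T = exp w * sqrt d * (2 * exp (- w) + 2 / sqrt d) * (\<delta> powr w * \<delta> powr (1 - w))"
        unfolding T_def p_eq ew assms(9) w_def[symmetric] by (simp add: algebra_simps)
      also have "\<dots> = (2 * sqrt d + 2 * exp w) * \<delta>"
        unfolding dd using d0 by (simp add: field_simps exp_minus)
      finally have "p * sqrt d * T = (2 * sqrt d + 2 * exp w) * \<delta>" .
      moreover have "1 \<le> exp w" using wpos by simp
      ultimately show ?thesis unfolding K_def using assms(4) by (simp add: algebra_simps)
    qed
    have "K \<le> p * sqrt d * norm v"
      using KT vT ppos d0 by (smt (verit) mult_left_mono mult_pos_pos real_sqrt_gt_0_iff)
    then have "K\<^sup>2 \<le> (p * sqrt d * norm v)\<^sup>2" using Kpos by (intro power_mono) auto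
    then have "lam \<le> p\<^sup>2"
      unfolding lam_def using d0 vpos by (simp add: divide_le_eq power_mult_distrib)
    then have "lam powr (d / 2) \<le> (p\<^sup>2) powr (d / 2)"
      using lampos d0 by (intro powr_mono2) auto
    also have "(p\<^sup>2) powr (d / 2) = (exp 1 * \<delta>) powr (w * d)"
    proof -
      have "p\<^sup>2 = (exp 1 * \<delta>) powr (w + w)"
        unfolding p_def power2_eq_square powr_add[symmetric] by simp
      then show ?thesis by (simp add: powr_powr)
    qed
    finally have lp: "lam powr (d / 2) \<le> (exp 1 * \<delta>) powr (w * d)" .
    have "measure M (L c) \<le> exp (d / 2) * lam powr (d / 2)"
      unfolding Leq using lower_tail[OF assms(8) v0 lampos] unfolding d_def by simp
    also have "\<dots> \<le> bnd" unfolding bnd_def by (rule mult_left_mono[OF lp]) simp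
    finally show ?thesis .
  qed
  have finC': "finite C'" unfolding C'_def using finC by simp
  have cardC': "card C' \<le> 2 ^ r"
    using cardC card_mono[OF finC, of C'] unfolding C'_def by auto
  have "measure M ?S \<le> measure M (B \<union> (\<Union>c\<in>C'. L c))"
    by (rule finite_measure_mono[OF incl]) (use measB measL finC' in auto)
  also have "\<dots> \<le> measure M B + measure M (\<Union>c\<in>C'. L c)"
    by (rule measure_subadditive) (use measB measL finC' in auto)
  also have "measure M (\<Union>c\<in>C'. L c) \<le> (\<Sum>c\<in>C'. measure M (L c))"
    by (rule finite_measure_subadditive_finite) (use measL finC' in auto)
  also have "\<dots> \<le> (\<Sum>c\<in>C'. bnd)" by (rule sum_mono[OF PL])
  also have "\<dots> = real (card C') * bnd" by simp
  also have "\<dots> \<le> 2 ^ r * bnd"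
  proof (rule mult_right_mono)
    show "real (card C') \<le> 2 ^ r" using cardC' by (metis of_nat_le_iff of_nat_numeral of_nat_power)
    show "0 \<le> bnd" unfolding bnd_def by simp
  qed
  also have "2 ^ r * bnd \<le> exp (- 0.3 * \<epsilon> * real r)"
    unfolding bnd_def w_def
    using numeric[OF assms(4,5,6) _ assms(10,11) d0] assms(7) unfolding d_def
    by (simp add: mult.assoc)
  finally show ?thesis using PB unfolding d_def by simp
qed

end
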